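(* Let $\alpha>0$, $\hbar>0$, $\sigma>0$ and let $n\geq 2$ be an integer. Define $$\psi_n(p)=N_G\,\Theta(-p)\,p^{n}e^{-\frac{p^{2}}{2\sigma^{2}}},\qquad N_G=\sqrt{\frac{2}{\sigma^{2n+1}\Gamma\left(n+\frac12\right)}},$$ where $\Theta$ is the Heaviside step function (so $\int_{\mathbb{R}}\psi_n^2\,dp=1$), and for $\tau\in\mathbb{R}$ let $$\mathcal{A}_n(\tau)=4\pi\int_{\mathbb{R}}dp\,\frac{\alpha^{4}}{p^{4}}\tau^{2}\,\psi_n(p)^{2}+4\pi\hbar^{2}\int_{\mathbb{R}}dp\,\left(\frac{d\psi_n(p)}{dp}\right)^{2}.$$ Then $\mathcal{A}_n(\tau)$ is finite for every $\tau$, attains its minimum over $\tau\in\mathbb{R}$ at $\tau=0$, and $$\mathcal{A}_n(0)=\frac{4\pi\hbar^{2}}{\sigma^{2}}\left(\frac{4n-1}{4n-2}\right)=4\pi(\Delta a)^{2},$$ where $(\Delta a)^2=\langle\hat a^2\rangle-\langle\hat a\rangle^2$ is the variance of the operator $\hat a=i\hbar\,\frac{d}{dp}$ in the state $\psi_n$, for which $\langle \hat a\rangle=\int\psi_n\, i\hbar\psi_n'\,dp=0$ and $\Delta a=\frac{\hbar}{\sigma}\sqrt{\frac{4n-1}{4n-2}}$.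
   Context: $\mathcal{A}_n(\tau)$ is the expectation value of the gauge-invariant area of 2-spheres in the Schwarzschild interior at relational time $\tau$ with clock operator $\hat T=\hat b$, evaluated on the Gaussian-type physical state $\psi_n(p_a)$; $\hat a$ is the areal-radius variable in momentum representation. *)

theory Defs
  imports "HOL-Analysis.Analysis"
begin

definition NG :: "real \<Rightarrow> nat \<Rightarrow> real" where
  "NG \<sigma> n = sqrt (2 / (\<sigma> ^ (2 * n + 1) * Gamma (real n + 1 / 2)))"

text \<open>Heaviside step function (value at 0 irrelevant here since p^n vanishes there).\<close>
definition heaviside :: "real \<Rightarrow> real" where
  "heaviside x = (if x > 0 then 1 else 0)"

definition psi :: "real \<Rightarrow> nat \<Rightarrow> real \<Rightarrow> real" where
  "psi \<sigma> n p = NG \<sigma> n * heaviside (- p) * p ^ n * exp (- (p ^ 2) / (2 * \<sigma> ^ 2))"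

text \<open>Expected area A_n(tau).  At p = 0 the factor alpha^4/p^4 is 0 by the HOL
  convention x/0 = 0; this is a single point and does not affect the integral.\<close>
definition area :: "real \<Rightarrow> real \<Rightarrow> real \<Rightarrow> nat \<Rightarrow> real \<Rightarrow> real" where
  "area \<alpha> hb \<sigma> n \<tau> =
     4 * pi * (\<integral>p. \<alpha> ^ 4 / p ^ 4 * \<tau> ^ 2 * (psi \<sigma> n p) ^ 2 \<partial>lborel)
   + 4 * pi * hb ^ 2 * (\<integral>p. (deriv (psi \<sigma> n) p) ^ 2 \<partial>lborel)"

definition expect_a :: "real \<Rightarrow> real \<Rightarrow> nat \<Rightarrow> complex" where
  "expect_a hb \<sigma> n =
     (\<integral>p. complex_of_real (psi \<sigma> n p) * (\<i> * complex_of_real hb * complex_of_real (deriv (psi \<sigma> n) p)) \<partial>lborel)"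

definition expect_a2 :: "real \<Rightarrow> real \<Rightarrow> nat \<Rightarrow> complex" where
  "expect_a2 hb \<sigma> n =
     (\<integral>p. complex_of_real (psi \<sigma> n p) * ((\<i> * complex_of_real hb) ^ 2 *
            complex_of_real (deriv (deriv (psi \<sigma> n)) p)) \<partial>lborel)"

definition variance_a :: "real \<Rightarrow> real \<Rightarrow> nat \<Rightarrow> complex" where
  "variance_a hb \<sigma> n = expect_a2 hb \<sigma> n - (expect_a hb \<sigma> n) ^ 2"

end

theory Submission
  imports Defs "HOL-Probability.Distributions"
begin


definition hm :: "real \<Rightarrow> nat \<Rightarrow> real \<Rightarrow> real" where
  "hm \<sigma> m p = indicator {..<0} p * p ^ m * exp (- (p ^ 2) / \<sigma> ^ 2)"

lemma hm_meas[measurable]: "hm \<sigma> m \<in> borel_measurable borel"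
  unfolding hm_def by measurable

lemma mom_gen:
  assumes s: "\<sigma> > 0"
    and fi: "integrable lborel (\<lambda>x::real. indicator {0..} x *\<^sub>R (exp (-x\<^sup>2)*x^m))"
    and fv: "integral\<^sup>L lborel (\<lambda>x::real. indicator {0..} x *\<^sub>R (exp (-x\<^sup>2)*x^m)) = v"
  shows "integrable lborel (hm \<sigma> m) \<and> integral\<^sup>L lborel (hm \<sigma> m) = \<sigma> * (-\<sigma>)^m * v"
proof -
  let ?f = "\<lambda>x::real. indicator {0..} x *\<^sub>R (exp (-x\<^sup>2)*x^m)"
  have ae: "AE x in lborel. hm \<sigma> m (0 + (-\<sigma>)*x) = (-\<sigma>)^m * ?f x"
    using AE_lborel_singleton[of 0]
  proof (rule eventually_mono)
    fix x :: real assume "x \<noteq> 0"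
    show "hm \<sigma> m (0 + (-\<sigma>)*x) = (-\<sigma>)^m * ?f x"
    proof (cases "x > 0")
      case True
      have "(- (\<sigma> * x))\<^sup>2 / \<sigma>\<^sup>2 = x\<^sup>2" using s by (simp add: power2_eq_square field_simps)
      moreover have "(- (\<sigma> * x))^m = (-\<sigma>)^m * x^m" by (metis minus_mult_left power_mult_distrib)
      ultimately show ?thesis using True s
        by (simp add: hm_def indicator_def mult_pos_pos)
    next
      case False
      then have "x < 0" using \<open>x \<noteq> 0\<close> by simp
      then show ?thesis using s mult_pos_neg[OF s \<open>x < 0\<close>] by (simp add: hm_def indicator_def)
    qed
  qed
  have i1: "integrable lborel (\<lambda>x. (-\<sigma>)^m * ?f x)" using fi by simp
  have i2: "integrable lborel (\<lambda>x. hm \<sigma> m (0 + (-\<sigma>)*x))"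
    using integrable_cong_AE[OF _ _ ae] i1 by simp
  have int: "integrable lborel (hm \<sigma> m)"
    using i2 lborel_integrable_real_affine_iff[of "-\<sigma>" "hm \<sigma> m" 0] s by simp
  have "integral\<^sup>L lborel (hm \<sigma> m) = \<bar>-\<sigma>\<bar> *\<^sub>R integral\<^sup>L lborel (\<lambda>x. hm \<sigma> m (0 + (-\<sigma>)*x))"
    using lborel_integral_real_affine[of "-\<sigma>" "hm \<sigma> m" 0] s by simp
  also have "\<dots> = \<sigma> * integral\<^sup>L lborel (\<lambda>x. (-\<sigma>)^m * ?f x)"
    using integral_cong_AE[OF _ _ ae] s by simp
  also have "\<dots> = \<sigma> * (-\<sigma>)^m * v" using fv by simp
  finally show ?thesis using int by simp
qed

lemma Gamma_half: "Gamma (real k + 1/2) = sqrt pi * (fact (2*k) / (2^(2*k) * fact k))"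
proof (induction k)
  case 0 then show ?case by (simp add: Gamma_one_half_real)
next
  case (Suc k)
  have "Gamma (real (Suc k) + 1/2) = (real k + 1/2) * Gamma (real k + 1/2)"
  proof -
    have "real k + 1/2 \<notin> \<int>\<^sub>\<le>\<^sub>0"
    proof
      assume "real k + 1/2 \<in> \<int>\<^sub>\<le>\<^sub>0"
      then have "real k + 1/2 \<le> 0" by (rule nonpos_Ints_nonpos)
      then show False by simp
    qed
    then show ?thesis using Gamma_plus1[of "real k + 1/2"] by (simp add: add_ac)
  qed
  also have "\<dots> = (real k + 1/2) * (sqrt pi * (fact (2*k) / (2^(2*k) * fact k)))" using Suc by simp
  also have "\<dots> = sqrt pi * (fact (2*Suc k) / (2^(2*Suc k) * fact (Suc k)))"
  proof -
    have e: "2 * Suc k = Suc (Suc (2*k))" by simp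
    have f1: "(fact (2*Suc k)::real) = (2*real k+2)*(2*real k+1)*fact(2*k)"
      unfolding e fact_Suc by (simp add: algebra_simps)
    have f2: "(fact (Suc k)::real) = (real k + 1) * fact k" by (simp add: algebra_simps)
    have f3: "(2::real)^(2*Suc k) = 4 * 2^(2*k)" unfolding e by simp
    have p: "(fact k::real) > 0" "(2::real)^(2*k) > 0" "real k + 1 > 0" by auto
    show ?thesis unfolding f1 f2 f3 using p by (simp add: divide_simps) (simp add: algebra_simps)
  qed
  finally show ?case .
qed

lemma mom_even:
  assumes s: "\<sigma> > 0"
  shows "integrable lborel (hm \<sigma> (2*k)) \<and> integral\<^sup>L lborel (hm \<sigma> (2*k)) = \<sigma>^(2*k+1) * Gamma (real k + 1/2) / 2"
proof -
  have h: "has_bochner_integral lborel (\<lambda>x::real. indicator {0..} x *\<^sub>R (exp (-x\<^sup>2)*x^(2 * k)))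
       ((sqrt pi / 2) * (fact (2 * k) / (2 ^ (2 * k) * fact k)))" by (rule gaussian_moment_even_pos)
  from mom_gen[OF s h[unfolded has_bochner_integral_iff, THEN conjunct1] h[unfolded has_bochner_integral_iff, THEN conjunct2]]
  show ?thesis by (simp add: Gamma_half power_mult)
qed

lemma mom_odd:
  assumes s: "\<sigma> > 0"
  shows "integrable lborel (hm \<sigma> (2*k+1)) \<and> integral\<^sup>L lborel (hm \<sigma> (2*k+1)) = - (\<sigma>^(2*k+2) * fact k / 2)"
proof -
  have h: "has_bochner_integral lborel (\<lambda>x::real. indicator {0..} x *\<^sub>R (exp (-x\<^sup>2)*x^(2 * k + 1)))
       (fact k / 2)" by (rule gaussian_moment_odd_pos)
  from mom_gen[OF s h[unfolded has_bochner_integral_iff, THEN conjunct1] h[unfolded has_bochner_integral_iff, THEN conjunct2]]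
  show ?thesis by (simp add: power_mult)
qed



definition EE :: "real \<Rightarrow> real \<Rightarrow> real" where
  "EE \<sigma> p = exp (- (p ^ 2) / (2 * \<sigma> ^ 2))"

definition d1 :: "real \<Rightarrow> nat \<Rightarrow> real \<Rightarrow> real" where
  "d1 \<sigma> m p = NG \<sigma> (m+2) * indicator {..<0} p * (real (m+2) * p^(m+1) - p^(m+3) / \<sigma>^2) * EE \<sigma> p"

definition d2 :: "real \<Rightarrow> nat \<Rightarrow> real \<Rightarrow> real" where
  "d2 \<sigma> m p = NG \<sigma> (m+2) * indicator {..<0} p *
     (real (m+2) * real (m+1) * p^m - (2 * real m + 5) * p^(m+2) / \<sigma>^2 + p^(m+4) / \<sigma>^4) * EE \<sigma> p"

lemma psi_eq: "psi \<sigma> n p = NG \<sigma> n * indicator {..<0} p * p ^ n * EE \<sigma> p"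
  by (simp add: psi_def heaviside_def EE_def indicator_def)

lemma s4: "(\<sigma>::real)^4 = \<sigma> * \<sigma> * \<sigma> * \<sigma>" by (simp add: numeral_eq_Suc)

lemma sne: "(\<sigma>::real) > 0 \<Longrightarrow> \<sigma>^2 \<noteq> 0" "(\<sigma>::real) > 0 \<Longrightarrow> \<sigma> \<noteq> 0" by auto

lemma EE_deriv: "\<sigma> > 0 \<Longrightarrow> (EE \<sigma> has_real_derivative (- p / \<sigma>^2 * EE \<sigma> p)) (at p)"
proof -
  have c: "((\<lambda>p. c * p^2) has_real_derivative c * (real 2 * p^(2-1))) (at p)" for c :: real
    by (auto intro!: derivative_eq_intros)
  have "((\<lambda>p. -(1/(2*\<sigma>^2)) * p^2) has_real_derivative -(1/(2*\<sigma>^2)) * (real 2 * p^(2-1))) (at p)"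
    by (rule c)
  from DERIV_fun_exp[OF this]
  have d: "((\<lambda>p. exp (-(1/(2*\<sigma>^2)) * p^2)) has_real_derivative exp (-(1/(2*\<sigma>^2)) * p^2) * (-(1/(2*\<sigma>^2)) * (real 2 * p^(2-1)))) (at p)" .
  have e1: "(\<lambda>p. exp (-(1/(2*\<sigma>^2)) * p^2)) = EE \<sigma>" by (auto simp: EE_def)
  have e2: "exp (-(1/(2*\<sigma>^2)) * p^2) * (-(1/(2*\<sigma>^2)) * (real 2 * p^(2-1))) = - p / \<sigma>^2 * EE \<sigma> p"
    by (simp add: EE_def)
  show "(EE \<sigma> has_real_derivative (- p / \<sigma>^2 * EE \<sigma> p)) (at p)" using d unfolding e1 e2 .
qed

lemma psi_deriv:
  assumes s: "\<sigma> > 0"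
  shows "(psi \<sigma> (m+2) has_real_derivative d1 \<sigma> m p) (at p)"
proof -
  let ?N = "NG \<sigma> (m+2)"
  let ?g = "\<lambda>q. ?N * q^(m+2) * EE \<sigma> q"
  let ?D = "\<lambda>q. real (m+2) * q^(m+1) - q^(m+3) / \<sigma>^2"
  have gd: "(?g has_real_derivative ?N * (real (m+2) * q^(m+1) - q^(m+3) / \<sigma>^2) * EE \<sigma> q) (at q)" for q
  proof -
    have "(?g has_real_derivative ?N * (real (m+2) * q^(m+2-1) * 1) * EE \<sigma> q + ?N * q^(m+2) * (- q / \<sigma>^2 * EE \<sigma> q)) (at q)"
      apply (rule DERIV_cong, (rule derivative_intros EE_deriv[OF s] sne[OF s])+)
      using s by (simp add: s4)
    moreover have "?N * (real (m+2) * q^(m+2-1) * 1) * EE \<sigma> q + ?N * q^(m+2) * (- q / \<sigma>^2 * EE \<sigma> q)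
       = ?N * (real (m+2) * q^(m+1) - q^(m+3) / \<sigma>^2) * EE \<sigma> q"
      by (simp add: field_simps power_add power2_eq_square power3_eq_cube)
    ultimately show ?thesis by simp
  qed
  consider "p < 0" | "p > 0" | "p = 0" by linarith
  then show ?thesis
  proof cases
    case 1
    have "(psi \<sigma> (m+2) has_real_derivative ?N * ?D p * EE \<sigma> p) (at p)"
      apply (rule has_field_derivative_transform_within_open[OF gd[of p], of "{..<0}"])
      using 1 by (auto simp: psi_eq d1_def)
    then show ?thesis using 1 by (simp add: d1_def)
  next
    case 2
    have "(psi \<sigma> (m+2) has_real_derivative 0) (at p)"
      apply (rule has_field_derivative_transform_within_open[of "\<lambda>_. 0" _ _ "{0<..}"])
      using 2 by (auto simp: psi_eq d1_def)
    then show ?thesis using 2 by (simp add: d1_def)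
  next
    case 3
    have L: "((\<lambda>h. (psi \<sigma> (m+2) (0 + h) - psi \<sigma> (m+2) 0) / h) \<longlongrightarrow> 0) (at_left 0)"
    proof -
      have "((\<lambda>h. ?N * h^(m+1) * EE \<sigma> h) \<longlongrightarrow> ?N * 0^(m+1) * EE \<sigma> 0) (at_left 0)"
        unfolding EE_def using s by (intro tendsto_intros) auto
      then have t: "((\<lambda>h. ?N * h^(m+1) * EE \<sigma> h) \<longlongrightarrow> 0) (at_left 0)" by simp
      have "eventually (\<lambda>h. ?N * h^(m+1) * EE \<sigma> h = (psi \<sigma> (m+2) (0 + h) - psi \<sigma> (m+2) 0) / h) (at_left 0)"
        unfolding eventually_at_filter
        by (rule always_eventually) (auto simp: psi_eq)
      from Lim_transform_eventually[OF t this] show ?thesis .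
    qed
    have R: "((\<lambda>h. (psi \<sigma> (m+2) (0 + h) - psi \<sigma> (m+2) 0) / h) \<longlongrightarrow> 0) (at_right 0)"
    proof -
      have "eventually (\<lambda>h. 0 = (psi \<sigma> (m+2) (0 + h) - psi \<sigma> (m+2) 0) / h) (at_right 0)"
        unfolding eventually_at_filter
        by (rule always_eventually) (auto simp: psi_eq)
      from Lim_transform_eventually[OF tendsto_const this] show ?thesis .
    qed
    have "DERIV (psi \<sigma> (m+2)) 0 :> 0"
      unfolding DERIV_def using L R filterlim_at_split by blast
    then show ?thesis using 3 by (simp add: d1_def)
  qed
qed

lemma deriv_psi:
  assumes s: "\<sigma> > 0"
  shows "deriv (psi \<sigma> (m+2)) = d1 \<sigma> m"
  using psi_deriv[OF s] DERIV_imp_deriv by blast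

lemma d1_deriv:
  assumes s: "\<sigma> > 0" and p: "p \<noteq> 0"
  shows "(d1 \<sigma> m has_real_derivative d2 \<sigma> m p) (at p)"
proof -
  let ?N = "NG \<sigma> (m+2)"
  let ?g = "\<lambda>q. ?N * (real (m+2) * q^(m+1) - q^(m+3) / \<sigma>^2) * EE \<sigma> q"
  let ?D = "\<lambda>q. real (m+2) * real (m+1) * q^m - (2 * real m + 5) * q^(m+2) / \<sigma>^2 + q^(m+4) / \<sigma>^4"
  have gd: "(?g has_real_derivative ?N *
     (real (m+2) * real (m+1) * q^m - (2 * real m + 5) * q^(m+2) / \<sigma>^2 + q^(m+4) / \<sigma>^4) * EE \<sigma> q) (at q)" for q
  proof -
    have "(?g has_real_derivative ?N * (real (m+2) * (real (m+1) * q^(m+1-1) * 1) - real (m+3) * q^(m+3-1) * 1 / \<sigma>^2) * EE \<sigma> q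
          + ?N * (real (m+2) * q^(m+1) - q^(m+3) / \<sigma>^2) * (- q / \<sigma>^2 * EE \<sigma> q)) (at q)"
      apply (rule DERIV_cong, (rule derivative_intros EE_deriv[OF s] sne[OF s])+)
      using s by (simp add: s4 power2_eq_square field_simps)
    moreover have "?N * (real (m+2) * (real (m+1) * q^(m+1-1) * 1) - real (m+3) * q^(m+3-1) * 1 / \<sigma>^2) * EE \<sigma> q
          + ?N * (real (m+2) * q^(m+1) - q^(m+3) / \<sigma>^2) * (- q / \<sigma>^2 * EE \<sigma> q)
       = ?N * (real (m+2) * real (m+1) * q^m - (2 * real m + 5) * q^(m+2) / \<sigma>^2 + q^(m+4) / \<sigma>^4) * EE \<sigma> q"
      using s by (simp add: field_simps power_add power2_eq_square power3_eq_cube s4)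
    ultimately show ?thesis by simp
  qed
  consider "p < 0" | "p > 0" using p by linarith
  then show ?thesis
  proof cases
    case 1
    have "(d1 \<sigma> m has_real_derivative ?N * ?D p * EE \<sigma> p) (at p)"
      apply (rule has_field_derivative_transform_within_open[OF gd[of p], of "{..<0}"])
      using 1 by (auto simp: d2_def d1_def)
    then show ?thesis using 1 by (simp add: d2_def)
  next
    case 2
    have "(d1 \<sigma> m has_real_derivative 0) (at p)"
      apply (rule has_field_derivative_transform_within_open[of "\<lambda>_. 0" _ _ "{0<..}"])
      using 2 by (auto simp: d2_def d1_def)
    then show ?thesis using 2 by (simp add: d2_def)
  qed
qed

lemma psi_dd:
  assumes s: "\<sigma> > 0"
  shows "psi \<sigma> (m+2) p * deriv (deriv (psi \<sigma> (m+2))) p = psi \<sigma> (m+2) p * d2 \<sigma> m p"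
proof (cases "p = 0")
  case True then show ?thesis by (simp add: psi_eq)
next
  case False
  have "deriv (d1 \<sigma> m) p = d2 \<sigma> m p" by (rule DERIV_imp_deriv[OF d1_deriv[OF s False]])
  then show ?thesis by (simp only: deriv_psi[OF s])
qed



lemma EEsq: "EE \<sigma> p ^ 2 = exp (- (p ^ 2) / \<sigma> ^ 2)"
proof -
  have "EE \<sigma> p ^ 2 = exp (- (p ^ 2) / (2 * \<sigma> ^ 2) + - (p ^ 2) / (2 * \<sigma> ^ 2))"
    unfolding EE_def power2_eq_square[of "exp _"] by (simp only: mult_exp_exp)
  also have "- (p ^ 2) / (2 * \<sigma> ^ 2) + - (p ^ 2) / (2 * \<sigma> ^ 2) = - (p ^ 2) / \<sigma> ^ 2"
    by (simp add: field_simps)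
  finally show ?thesis .
qed

lemma hm_neg: "p < 0 \<Longrightarrow> hm \<sigma> k p = p ^ k * EE \<sigma> p ^ 2"
  by (simp add: hm_def EEsq)
lemma hm_nn: "\<not> p < 0 \<Longrightarrow> hm \<sigma> k p = 0"
  by (simp add: hm_def)

lemma P1: "psi \<sigma> (m+2) p ^ 2 = NG \<sigma> (m+2) ^ 2 * hm \<sigma> (2*m+4) p"
  by (cases "p < 0") (simp_all add: psi_eq hm_neg hm_nn power_mult_distrib power_mult[symmetric] mult_ac power_add)

lemma hm_neg2: "p < 0 \<Longrightarrow> hm \<sigma> (2*m+k) p = p^m * p^m * p^k * EE \<sigma> p ^ 2"
  by (simp add: hm_neg power_add power_mult_distrib flip: power_add mult_2)

lemma hm_neg0: "p < 0 \<Longrightarrow> hm \<sigma> (2*m) p = p^m * p^m * EE \<sigma> p ^ 2"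
  by (simp add: hm_neg flip: power_add mult_2)

lemma P2: "\<alpha> ^ 4 / p ^ 4 * \<tau> ^ 2 * psi \<sigma> (m+2) p ^ 2 = (\<alpha>^4 * \<tau>^2 * NG \<sigma> (m+2) ^ 2) * hm \<sigma> (2*m) p"
proof (cases "p < 0")
  case True
  then have "p \<noteq> 0" by simp
  then show ?thesis using True
    by (simp only: hm_neg0[OF True]) (simp add: psi_eq power_add numeral_eq_Suc power_Suc field_simps)
qed (simp add: psi_eq hm_nn)

lemma P3: assumes "\<sigma> > 0" shows "d1 \<sigma> m p ^ 2 = NG \<sigma> (m+2) ^ 2 * ((real (m+2))^2 * hm \<sigma> (2*m+2) p
     - 2 * real (m+2) / \<sigma>^2 * hm \<sigma> (2*m+4) p + 1 / \<sigma>^4 * hm \<sigma> (2*m+6) p)"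
proof (cases "p < 0")
  case True
  then show ?thesis using assms by (simp only: hm_neg2[OF True]) (simp add: d1_def power_add numeral_eq_Suc power_Suc field_simps)
qed (simp add: d1_def hm_nn)

lemma P4: assumes "\<sigma> > 0" shows "psi \<sigma> (m+2) p * d1 \<sigma> m p = NG \<sigma> (m+2) ^ 2 * (real (m+2) * hm \<sigma> (2*m+3) p
     - 1 / \<sigma>^2 * hm \<sigma> (2*m+5) p)"
proof (cases "p < 0")
  case True
  then show ?thesis by (simp only: hm_neg2[OF True]) (simp add: psi_eq d1_def power_add numeral_eq_Suc power_Suc field_simps)
qed (simp add: psi_eq d1_def hm_nn)

lemma P5: assumes "\<sigma> > 0" shows "psi \<sigma> (m+2) p * d2 \<sigma> m p = NG \<sigma> (m+2) ^ 2 * (real (m+2) * real (m+1) * hm \<sigma> (2*m+2) p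
     - (2 * real m + 5) / \<sigma>^2 * hm \<sigma> (2*m+4) p + 1 / \<sigma>^4 * hm \<sigma> (2*m+6) p)"
proof (cases "p < 0")
  case True
  then show ?thesis by (simp only: hm_neg2[OF True]) (simp add: psi_eq d2_def power_add numeral_eq_Suc power_Suc field_simps)
qed (simp add: psi_eq d2_def hm_nn)



lemma mom_even':
  assumes "\<sigma> > 0" "j = 2*k"
  shows "has_bochner_integral lborel (hm \<sigma> j) (\<sigma>^(j+1) * Gamma (real k + 1/2) / 2)"
  using mom_even[OF assms(1), of k] assms(2) by (simp add: has_bochner_integral_iff)

lemma mom_odd':
  assumes "\<sigma> > 0" "j = 2*k+1"
  shows "has_bochner_integral lborel (hm \<sigma> j) (- (\<sigma>^(j+1) * fact k / 2))"
  using mom_odd[OF assms(1), of k] assms(2) by (simp add: has_bochner_integral_iff)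

lemma pw: "a = b + c \<Longrightarrow> (x::real)^a = x^b * x^c" by (simp add: power_add)

lemma Gp: "(x::real) > 0 \<Longrightarrow> Gamma (x + 1) = x * Gamma x"
proof -
  assume x: "x > 0"
  have "x \<notin> \<int>\<^sub>\<le>\<^sub>0"
  proof
    assume "x \<in> \<int>\<^sub>\<le>\<^sub>0"
    then have "x \<le> 0" by (rule nonpos_Ints_nonpos)
    then show False using x by simp
  qed
  then show ?thesis using Gamma_plus1[of x] by simp
qed

lemma alg_norm: "S > 0 \<Longrightarrow> (G::real) > 0 \<Longrightarrow> \<sigma> > 0 \<Longrightarrow> x \<ge> 0 \<Longrightarrow>
   2 / (S * \<sigma>^2 * ((x + 3/2) * G)) * (S * \<sigma>^2 * ((x + 3/2) * G) / 2) = 1"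
  by (subgoal_tac "x + 3/2 \<noteq> 0") simp_all

lemma alg_Y0: "S > 0 \<Longrightarrow> (G::real) > 0 \<Longrightarrow> \<sigma> > 0 \<Longrightarrow> y > 0 \<Longrightarrow>
   2 / (S * \<sigma>^2 * (y * G)) * ((y+1/2)^2 * (S * G / 2)
     - 2 * (y+1/2) / \<sigma>^2 * (S * \<sigma>^2 * (y * G) / 2)
     + 1 / \<sigma>^4 * (S * \<sigma>^4 * ((y+1) * (y * G)) / 2))
   = 1 / \<sigma>^2 * ((4 * y + 1) / (4 * y))"
  by (simp add: field_simps power2_eq_square s4)

lemma alg_X0: "S > 0 \<Longrightarrow> (G::real) > 0 \<Longrightarrow> \<sigma> > 0 \<Longrightarrow> y > 0 \<Longrightarrow>
   2 / (S * \<sigma>^2 * (y * G)) * ((y+1/2) * (y-1/2) * (S * G / 2)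
     - (2 * y + 2) / \<sigma>^2 * (S * \<sigma>^2 * (y * G) / 2)
     + 1 / \<sigma>^4 * (S * \<sigma>^4 * ((y+1) * (y * G)) / 2))
   = - (1 / \<sigma>^2 * ((4 * y + 1) / (4 * y)))"
  by (simp add: field_simps power2_eq_square s4)

lemma main_m:
  fixes \<alpha> hb \<sigma> :: real and m :: nat
  assumes "\<alpha> > 0" and "hb > 0" and s: "\<sigma> > 0"
  shows "((\<integral>p. (psi \<sigma> (m+2) p) ^ 2 \<partial>lborel) = 1) \<and>
         (\<forall>\<tau>::real. integrable lborel (\<lambda>p. \<alpha> ^ 4 / p ^ 4 * \<tau> ^ 2 * (psi \<sigma> (m+2) p) ^ 2)) \<and>
         (integrable lborel (\<lambda>p. (deriv (psi \<sigma> (m+2)) p) ^ 2)) \<and>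
         (\<forall>\<tau>::real. area \<alpha> hb \<sigma> (m+2) 0 \<le> area \<alpha> hb \<sigma> (m+2) \<tau>) \<and>
         (area \<alpha> hb \<sigma> (m+2) 0 = 4 * pi * hb ^ 2 / \<sigma> ^ 2 * ((4 * real (m+2) - 1) / (4 * real (m+2) - 2))) \<and>
         (complex_of_real (area \<alpha> hb \<sigma> (m+2) 0) = 4 * pi * variance_a hb \<sigma> (m+2)) \<and>
         (expect_a hb \<sigma> (m+2) = 0) \<and>
         (variance_a hb \<sigma> (m+2) = complex_of_real ((hb / \<sigma> * sqrt ((4 * real (m+2) - 1) / (4 * real (m+2) - 2))) ^ 2))"
proof -
  define y where "y = real (m+1) + 1/2"
  define G1 where "G1 = Gamma (real (m+1) + 1/2)"
  define S where "S = \<sigma> ^ (2*m+3)"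
  define T where "T = \<sigma> ^ (2*m+4)"
  define N2 where "N2 = NG \<sigma> (m+2) ^ 2"
  define R where "R = (4 * real (m+2) - 1) / (4 * real (m+2) - 2)"
  have y0: "y > 0" by (simp add: y_def)
  have G10: "G1 > 0" unfolding G1_def by (rule Gamma_real_pos) simp
  have S0: "S > 0" unfolding S_def using s by simp
  have G2: "Gamma (real (m+2) + 1/2) = y * G1"
  proof -
    have "real (m+2) + 1/2 = y + 1" by (simp add: y_def)
    then show ?thesis using Gp[OF y0] by (simp add: G1_def y_def)
  qed
  have G3: "Gamma (real (m+3) + 1/2) = (y + 1) * (y * G1)"
  proof -
    have "real (m+3) + 1/2 = (y + 1) + 1" by (simp add: y_def)
    moreover have "y + 1 = real (m+2) + 1/2" by (simp add: y_def)
    ultimately show ?thesis using Gp[of "y+1"] y0 G2 by simp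
  qed
  have N2v: "N2 = 2 / (S * \<sigma>^2 * (y * G1))"
  proof -
    have "\<sigma> ^ (2 * (m+2) + 1) = S * \<sigma>^2" unfolding S_def by (rule pw) simp
    moreover have "Gamma (real (m+2) + 1/2) > 0" by (rule Gamma_real_pos) simp
    ultimately show ?thesis unfolding N2_def NG_def using s S0 G2 y0 G10
      by (simp add: real_sqrt_pow2)
  qed
  have I2: "has_bochner_integral lborel (hm \<sigma> (2*m+2)) (S * G1 / 2)"
  proof -
    have h: "has_bochner_integral lborel (hm \<sigma> (2*m+2)) (\<sigma>^(2*m+2+1) * Gamma (real (m+1) + 1/2) / 2)"
      by (rule mom_even'[OF s]) simp
    have e: "(2::nat)*m+2+1 = 2*m+3" by simp
    show ?thesis using h unfolding e S_def G1_def .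
  qed
  have I4: "has_bochner_integral lborel (hm \<sigma> (2*m+4)) (S * \<sigma>^2 * (y * G1) / 2)"
  proof -
    have "\<sigma> ^ (2*m+4+1) = S * \<sigma>^2" unfolding S_def by (simp flip: power_add)
    then show ?thesis using mom_even'[OF s, of "2*m+4" "m+2"] G2 by simp
  qed
  have I6: "has_bochner_integral lborel (hm \<sigma> (2*m+6)) (S * \<sigma>^4 * ((y + 1) * (y * G1)) / 2)"
  proof -
    have "\<sigma> ^ (2*m+6+1) = S * \<sigma>^4" unfolding S_def by (simp flip: power_add)
    then show ?thesis using mom_even'[OF s, of "2*m+6" "m+3"] G3 by simp
  qed
  have I3: "has_bochner_integral lborel (hm \<sigma> (2*m+3)) (- (T * fact (m+1) / 2))"
  proof -
    have h: "has_bochner_integral lborel (hm \<sigma> (2*m+3)) (- (\<sigma>^(2*m+3+1) * fact (m+1) / 2))"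
      by (rule mom_odd'[OF s]) simp
    have e: "(2::nat)*m+3+1 = 2*m+4" by simp
    show ?thesis using h unfolding e T_def .
  qed
  have I5: "has_bochner_integral lborel (hm \<sigma> (2*m+5)) (- (T * \<sigma>^2 * (real (m+2) * fact (m+1)) / 2))"
  proof -
    have "\<sigma> ^ (2*m+5+1) = T * \<sigma>^2" unfolding T_def by (simp flip: power_add)
    moreover have "(fact (m+2) :: real) = real (m+2) * fact (m+1)" by simp
    ultimately show ?thesis using mom_odd'[OF s, of "2*m+5" "m+2"] by simp
  qed
  have I0: "integrable lborel (hm \<sigma> (2*m))"
    using mom_even[OF s, of m] by simp
  have Rv: "(4 * y + 1) / (4 * y) = R" unfolding R_def y_def by (simp add: algebra_simps)

  have H1: "has_bochner_integral lborel (\<lambda>p. psi \<sigma> (m+2) p ^ 2) 1"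
  proof -
    have "has_bochner_integral lborel (\<lambda>p. N2 * hm \<sigma> (2*m+4) p) (N2 * (S * \<sigma>^2 * (y * G1) / 2))"
      by (rule has_bochner_integral_mult_right[OF I4])
    moreover have "N2 * (S * \<sigma>^2 * (y * G1) / 2) = 1" unfolding N2v using S0 G10 y0 s by simp
    moreover have fe: "(\<lambda>p. psi \<sigma> (m+2) p ^ 2) = (\<lambda>p. N2 * hm \<sigma> (2*m+4) p)"
      by (rule ext) (simp only: P1 N2_def)
    ultimately show ?thesis unfolding fe by simp
  qed
  have H2: "integrable lborel (\<lambda>p. \<alpha> ^ 4 / p ^ 4 * \<tau> ^ 2 * (psi \<sigma> (m+2) p) ^ 2)" for \<tau>
    unfolding P2 using I0 by simp
  have r2: "real (m+2) = y + 1/2" and r1: "real (m+1) = y - 1/2" and r5: "2 * real m + 5 = 2 * y + 2"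
    by (simp_all add: y_def)
  have H3: "has_bochner_integral lborel (\<lambda>p. deriv (psi \<sigma> (m+2)) p ^ 2) (R / \<sigma>^2)"
  proof -
    have hb: "has_bochner_integral lborel (\<lambda>p. N2 * ((real (m+2))^2 * hm \<sigma> (2*m+2) p
     - 2 * real (m+2) / \<sigma>^2 * hm \<sigma> (2*m+4) p + 1 / \<sigma>^4 * hm \<sigma> (2*m+6) p))
       (N2 * ((real (m+2))^2 * (S * G1 / 2) - 2 * real (m+2) / \<sigma>^2 * (S * \<sigma>^2 * (y * G1) / 2)
          + 1 / \<sigma>^4 * (S * \<sigma>^4 * ((y + 1) * (y * G1)) / 2)))"
      by (intro has_bochner_integral_mult_right has_bochner_integral_add has_bochner_integral_diff I2 I4 I6)
    have fe: "(\<lambda>p. deriv (psi \<sigma> (m+2)) p ^ 2) = (\<lambda>p. N2 * ((real (m+2))^2 * hm \<sigma> (2*m+2) p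
     - 2 * real (m+2) / \<sigma>^2 * hm \<sigma> (2*m+4) p + 1 / \<sigma>^4 * hm \<sigma> (2*m+6) p))"
      by (rule ext) (simp only: deriv_psi[OF s] P3[OF s] N2_def)
    have ve: "N2 * ((real (m+2))^2 * (S * G1 / 2) - 2 * real (m+2) / \<sigma>^2 * (S * \<sigma>^2 * (y * G1) / 2)
          + 1 / \<sigma>^4 * (S * \<sigma>^4 * ((y + 1) * (y * G1)) / 2)) = R / \<sigma>^2"
      unfolding r2 N2v alg_Y0[OF S0 G10 s y0] Rv by simp
    show ?thesis using hb unfolding fe ve .
  qed
  have H4: "has_bochner_integral lborel (\<lambda>p. psi \<sigma> (m+2) p * deriv (psi \<sigma> (m+2)) p) 0"
  proof -
    have hb: "has_bochner_integral lborel (\<lambda>p. N2 * (real (m+2) * hm \<sigma> (2*m+3) p - 1 / \<sigma>^2 * hm \<sigma> (2*m+5) p))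
       (N2 * (real (m+2) * (- (T * fact (m+1) / 2)) - 1 / \<sigma>^2 * (- (T * \<sigma>^2 * (real (m+2) * fact (m+1)) / 2))))"
      by (intro has_bochner_integral_mult_right has_bochner_integral_diff I3 I5)
    have fe: "(\<lambda>p. psi \<sigma> (m+2) p * deriv (psi \<sigma> (m+2)) p) =
        (\<lambda>p. N2 * (real (m+2) * hm \<sigma> (2*m+3) p - 1 / \<sigma>^2 * hm \<sigma> (2*m+5) p))"
      by (rule ext) (simp only: deriv_psi[OF s] P4[OF s] N2_def)
    have ve: "N2 * (real (m+2) * (- (T * fact (m+1) / 2)) - 1 / \<sigma>^2 * (- (T * \<sigma>^2 * (real (m+2) * fact (m+1)) / 2))) = 0"
      using s by simp
    show ?thesis using hb unfolding fe ve .
  qed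
  have H5: "has_bochner_integral lborel (\<lambda>p. psi \<sigma> (m+2) p * deriv (deriv (psi \<sigma> (m+2))) p) (- (R / \<sigma>^2))"
  proof -
    have hb: "has_bochner_integral lborel (\<lambda>p. N2 * (real (m+2) * real (m+1) * hm \<sigma> (2*m+2) p
     - (2 * real m + 5) / \<sigma>^2 * hm \<sigma> (2*m+4) p + 1 / \<sigma>^4 * hm \<sigma> (2*m+6) p))
       (N2 * (real (m+2) * real (m+1) * (S * G1 / 2) - (2 * real m + 5) / \<sigma>^2 * (S * \<sigma>^2 * (y * G1) / 2)
          + 1 / \<sigma>^4 * (S * \<sigma>^4 * ((y + 1) * (y * G1)) / 2)))"
      by (intro has_bochner_integral_mult_right has_bochner_integral_add has_bochner_integral_diff I2 I4 I6)
    have fe: "(\<lambda>p. psi \<sigma> (m+2) p * deriv (deriv (psi \<sigma> (m+2))) p) = (\<lambda>p. N2 * (real (m+2) * real (m+1) * hm \<sigma> (2*m+2) p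
     - (2 * real m + 5) / \<sigma>^2 * hm \<sigma> (2*m+4) p + 1 / \<sigma>^4 * hm \<sigma> (2*m+6) p))"
      by (rule ext) (simp only: psi_dd[OF s] P5[OF s] N2_def)
    have ve: "N2 * (real (m+2) * real (m+1) * (S * G1 / 2) - (2 * real m + 5) / \<sigma>^2 * (S * \<sigma>^2 * (y * G1) / 2)
          + 1 / \<sigma>^4 * (S * \<sigma>^4 * ((y + 1) * (y * G1)) / 2)) = - (R / \<sigma>^2)"
      unfolding r2 r1 r5 N2v alg_X0[OF S0 G10 s y0] Rv by simp
    show ?thesis using hb unfolding fe ve .
  qed
  have R0: "R > 0" unfolding R_def by (simp add: field_simps)
  have Y: "(\<integral>p. (deriv (psi \<sigma> (m+2)) p) ^ 2 \<partial>lborel) = R / \<sigma>^2"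
    using H3 by (simp add: has_bochner_integral_iff)
  have area_eq: "area \<alpha> hb \<sigma> (m+2) \<tau> = 4 * pi * (\<integral>p. \<alpha> ^ 4 / p ^ 4 * \<tau> ^ 2 * (psi \<sigma> (m+2) p) ^ 2 \<partial>lborel)
      + 4 * pi * hb ^ 2 * (R / \<sigma>^2)" for \<tau>
    unfolding area_def Y ..
  have A0: "area \<alpha> hb \<sigma> (m+2) 0 = 4 * pi * hb ^ 2 * (R / \<sigma>^2)"
    unfolding area_eq by simp
  have Amono: "area \<alpha> hb \<sigma> (m+2) 0 \<le> area \<alpha> hb \<sigma> (m+2) \<tau>" for \<tau>
  proof -
    have "0 \<le> (\<integral>p. \<alpha> ^ 4 / p ^ 4 * \<tau> ^ 2 * (psi \<sigma> (m+2) p) ^ 2 \<partial>lborel)"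
      by (rule Bochner_Integration.integral_nonneg) simp
    then show ?thesis unfolding A0 area_eq by simp
  qed
  have E1: "expect_a hb \<sigma> (m+2) = 0"
  proof -
    have "(\<lambda>p. complex_of_real (psi \<sigma> (m+2) p) * (\<i> * complex_of_real hb * complex_of_real (deriv (psi \<sigma> (m+2)) p)))
        = (\<lambda>p. complex_of_real (psi \<sigma> (m+2) p * deriv (psi \<sigma> (m+2)) p) * (\<i> * complex_of_real hb))"
      by (rule ext) (simp add: mult_ac)
    then have "expect_a hb \<sigma> (m+2) = (\<integral>p. complex_of_real (psi \<sigma> (m+2) p * deriv (psi \<sigma> (m+2)) p) * (\<i> * complex_of_real hb) \<partial>lborel)"
      unfolding expect_a_def by simp
    also have "\<dots> = complex_of_real (\<integral>p. psi \<sigma> (m+2) p * deriv (psi \<sigma> (m+2)) p \<partial>lborel) * (\<i> * complex_of_real hb)"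
      by (simp only: integral_mult_left_zero integral_complex_of_real)
    also have "\<dots> = 0" using H4 by (simp add: has_bochner_integral_iff)
    finally show ?thesis .
  qed
  have E2: "expect_a2 hb \<sigma> (m+2) = complex_of_real (hb^2 * (R / \<sigma>^2))"
  proof -
    have eq1: "(\<lambda>p. complex_of_real (psi \<sigma> (m+2) p) * ((\<i> * complex_of_real hb) ^ 2 *
            complex_of_real (deriv (deriv (psi \<sigma> (m+2))) p)))
        = (\<lambda>p. complex_of_real (psi \<sigma> (m+2) p * deriv (deriv (psi \<sigma> (m+2))) p) * ((\<i> * complex_of_real hb) ^ 2))"
      by (rule ext) (simp add: mult_ac)
    have eq2: "(\<i> * complex_of_real hb) ^ 2 = - complex_of_real (hb^2)"
      by (simp add: power_mult_distrib)
    have "expect_a2 hb \<sigma> (m+2) = (\<integral>p. complex_of_real (psi \<sigma> (m+2) p * deriv (deriv (psi \<sigma> (m+2))) p) * ((\<i> * complex_of_real hb) ^ 2) \<partial>lborel)"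
      unfolding expect_a2_def eq1 by simp
    also have "\<dots> = complex_of_real (\<integral>p. psi \<sigma> (m+2) p * deriv (deriv (psi \<sigma> (m+2))) p \<partial>lborel) * ((\<i> * complex_of_real hb) ^ 2)"
      by (simp only: integral_mult_left_zero integral_complex_of_real)
    also have "\<dots> = complex_of_real (- (R / \<sigma>^2)) * (- complex_of_real (hb^2))"
      using H5 eq2 by (simp add: has_bochner_integral_iff)
    also have "\<dots> = complex_of_real (hb^2 * (R / \<sigma>^2))" by simp
    finally show ?thesis .
  qed
  have V: "variance_a hb \<sigma> (m+2) = complex_of_real (hb^2 * (R / \<sigma>^2))"
    unfolding variance_a_def E1 E2 by simp
  have sq: "(hb / \<sigma> * sqrt R) ^ 2 = hb^2 * (R / \<sigma>^2)"
    using R0 by (simp add: power_mult_distrib power_divide real_sqrt_pow2)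
  show ?thesis
    unfolding R_def[symmetric]
    using H1 H2 H3 Amono A0 V E1 sq
    by (simp add: has_bochner_integral_iff)
qed


theorem mainTheorem3:
  fixes \<alpha> hb \<sigma> :: real and n :: nat
  assumes "\<alpha> > 0" and "hb > 0" and "\<sigma> > 0" and "n \<ge> 2"
  shows "((\<integral>p. (psi \<sigma> n p) ^ 2 \<partial>lborel) = 1) \<and>
         (\<forall>\<tau>::real. integrable lborel (\<lambda>p. \<alpha> ^ 4 / p ^ 4 * \<tau> ^ 2 * (psi \<sigma> n p) ^ 2)) \<and>
         (integrable lborel (\<lambda>p. (deriv (psi \<sigma> n) p) ^ 2)) \<and>
         (\<forall>\<tau>::real. area \<alpha> hb \<sigma> n 0 \<le> area \<alpha> hb \<sigma> n \<tau>) \<and>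
         (area \<alpha> hb \<sigma> n 0 = 4 * pi * hb ^ 2 / \<sigma> ^ 2 * ((4 * real n - 1) / (4 * real n - 2))) \<and>
         (complex_of_real (area \<alpha> hb \<sigma> n 0) = 4 * pi * variance_a hb \<sigma> n) \<and>
         (expect_a hb \<sigma> n = 0) \<and>
         (variance_a hb \<sigma> n = complex_of_real ((hb / \<sigma> * sqrt ((4 * real n - 1) / (4 * real n - 2))) ^ 2))"
proof -
  define m where "m = n - 2"
  have n: "n = m + 2" using assms(4) by (simp add: m_def)
  note X = main_m[OF assms(1,2,3), of m]
  show ?thesis unfolding n by (rule X)
qed


end
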